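(* All twelve POPs $(a,b,c;d)$ with $d\in\{2,3\}$ and $(a,b,c)$ an arbitrary ordering of $[4]\setminus\{d\}$ are Wilf-equivalent to one another; in particular $(4,1,2;3)\sim(4,2,1;3)\sim(2,4,1;3)$.
   Context: A partially ordered pattern (POP) $p$ of size $k$ is a partial order $\le_p$ on $[k]$. A permutation $\pi=\pi_1\cdots\pi_n$ contains $p$ if there are indices $i_1<\dots<i_k$ with $\pi_{i_j}<\pi_{i_m}$ whenever $j<_p m$; otherwise it avoids $p$. $p\sim q$ (Wilf-equivalence) means the numbers of permutations of $[n]$ avoiding $p$ and avoiding $q$ coincide for all $n\ge1$. Notation: $(a,b,c;d)$ denotes the POP of size $4$ on $\{a,b,c,d\}=[4]$ in which $c<b<a$ form a chain and $d$ is isolated. *)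

theory Defs
  imports Main
begin

text \<open>A POP of size k is given by its strict order relation lt on {1..k}
  (lt j m means j <_p m). A permutation of [n] is a list of length n,
  distinct, with entries {1..n}; positions are 0-based list indices.\<close>

definition perms :: "nat \<Rightarrow> nat list set" where
  "perms n = {\<pi>. distinct \<pi> \<and> set \<pi> = {1..n}}"

definition contains_pop :: "nat \<Rightarrow> (nat \<Rightarrow> nat \<Rightarrow> bool) \<Rightarrow> nat list \<Rightarrow> bool" where
  "contains_pop k lt \<pi> \<longleftrightarrow>
     (\<exists>\<iota> :: nat \<Rightarrow> nat. strict_mono_on {1..k} \<iota> \<and> (\<forall>j\<in>{1..k}. \<iota> j < length \<pi>) \<and>
        (\<forall>j\<in>{1..k}. \<forall>m\<in>{1..k}. lt j m \<longrightarrow> \<pi> ! (\<iota> j) < \<pi> ! (\<iota> m)))"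

definition avoiders :: "nat \<Rightarrow> nat \<Rightarrow> (nat \<Rightarrow> nat \<Rightarrow> bool) \<Rightarrow> nat list set" where
  "avoiders n k lt = {\<pi> \<in> perms n. \<not> contains_pop k lt \<pi>}"

definition wilf_equiv :: "nat \<Rightarrow> (nat \<Rightarrow> nat \<Rightarrow> bool) \<Rightarrow> (nat \<Rightarrow> nat \<Rightarrow> bool) \<Rightarrow> bool" where
  "wilf_equiv k p q \<longleftrightarrow> (\<forall>n\<ge>1. card (avoiders n k p) = card (avoiders n k q))"

text \<open>The POP (a,b,c;d) of size 4: chain c < b < a, d isolated (strict order).\<close>
definition chain_pop :: "nat \<Rightarrow> nat \<Rightarrow> nat \<Rightarrow> nat \<Rightarrow> nat \<Rightarrow> nat \<Rightarrow> bool" where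
  "chain_pop a b c d = (\<lambda>j m. (j = c \<and> m = b) \<or> (j = b \<and> m = a) \<or> (j = c \<and> m = a))"

end

theory Submission
  imports Defs
begin


definition sh :: "nat \<Rightarrow> nat \<Rightarrow> nat" where
  "sh v x = (if v \<le> x then Suc x else x)"
definition unsh :: "nat \<Rightarrow> nat \<Rightarrow> nat" where
  "unsh v x = (if v < x then x - 1 else x)"
definition rho :: "nat \<Rightarrow> nat \<Rightarrow> nat" where
  "rho v s = (if s \<le> v then s else s - 1)"
definition ext :: "nat list \<Rightarrow> nat \<Rightarrow> nat list" where
  "ext p v = map (sh v) p @ [v]"

lemma sh_less_iff[simp]: "sh v x < sh v y \<longleftrightarrow> x < y"
  unfolding sh_def by auto
lemma sh_le_iff[simp]: "sh v x \<le> sh v y \<longleftrightarrow> x \<le> y"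
  unfolding sh_def by auto
lemma sh_eq_iff[simp]: "sh v x = sh v y \<longleftrightarrow> x = y"
  unfolding sh_def by auto
lemma sh_neq[simp]: "sh v x \<noteq> v"
  unfolding sh_def by auto
lemma inj_sh: "inj (sh v)"
  by (auto intro: injI)
lemma sh_unsh: "x \<noteq> v \<Longrightarrow> sh v (unsh v x) = x"
  unfolding sh_def unsh_def by auto
lemma unsh_sh: "unsh v (sh v x) = x"
  unfolding sh_def unsh_def by auto

lemma perms_length: "p \<in> perms n \<Longrightarrow> length p = n"
proof -
  assume "p \<in> perms n"
  then have "distinct p" "set p = {1..n}" unfolding perms_def by auto
  then have "length p = card {1..n}" using distinct_card by metis
  then show ?thesis by simp
qed

lemma perms_set: "p \<in> perms n \<Longrightarrow> set p = {1..n}"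
  unfolding perms_def by simp

lemma perms_nth: "p \<in> perms n \<Longrightarrow> i < n \<Longrightarrow> p ! i \<in> {1..n}"
proof -
  assume a: "p \<in> perms n" "i < n"
  then have "p ! i \<in> set p" using perms_length by simp
  then show ?thesis using perms_set[OF a(1)] by simp
qed

lemma perms_ex: "p \<in> perms n \<Longrightarrow> x \<in> {1..n} \<Longrightarrow> \<exists>i<n. p ! i = x"
proof -
  assume a: "p \<in> perms n" "x \<in> {1..n}"
  then have "x \<in> set p" using perms_set by blast
  then show ?thesis using perms_length[OF a(1)] by (simp add: in_set_conv_nth)
qed

lemma finite_perms: "finite (perms n)"
proof -
  have "perms n \<subseteq> {xs. set xs \<subseteq> {1..n} \<and> length xs = n}"
    using perms_length unfolding perms_def by auto
  moreover have "finite {xs. set xs \<subseteq> {1..n} \<and> length xs = n}"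
    by (rule finite_lists_length_eq) simp
  ultimately show ?thesis by (rule finite_subset)
qed

lemma sh_image: "v \<in> {1..Suc n} \<Longrightarrow> sh v ` {1..n} = {1..Suc n} - {v}"
proof
  assume v: "v \<in> {1..Suc n}"
  show "sh v ` {1..n} \<subseteq> {1..Suc n} - {v}" using v unfolding sh_def by auto
  show "{1..Suc n} - {v} \<subseteq> sh v ` {1..n}"
  proof
    fix x assume x: "x \<in> {1..Suc n} - {v}"
    then have "x = sh v (unsh v x)" using sh_unsh by auto
    moreover have "unsh v x \<in> {1..n}" using x v unfolding unsh_def by auto
    ultimately show "x \<in> sh v ` {1..n}" by blast
  qed
qed

lemma ext_perms: "p \<in> perms n \<Longrightarrow> v \<in> {1..Suc n} \<Longrightarrow> ext p v \<in> perms (Suc n)"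
  unfolding perms_def ext_def
  using sh_image[of v n] by (auto simp: distinct_map inj_on_def)

lemma ext_length[simp]: "length (ext p v) = Suc (length p)"
  unfolding ext_def by simp

lemma ext_nth: "i < length p \<Longrightarrow> ext p v ! i = sh v (p ! i)"
  unfolding ext_def by (simp add: nth_append)
lemma ext_nth_last: "ext p v ! length p = v"
  unfolding ext_def by (simp add: nth_append)

lemma ext_inj: "ext p v = ext q w \<Longrightarrow> length p = length q \<Longrightarrow> p = q \<and> v = w"
proof -
  assume e: "ext p v = ext q w" and l: "length p = length q"
  have vw: "v = w" using e unfolding ext_def by simp
  then have "map (sh v) p = map (sh v) q" using e unfolding ext_def by simp
  then have "p = q" using inj_sh by (simp add: inj_map_eq_map)
  with vw show ?thesis by simp
qed

lemma ext_surj: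
  assumes s: "s \<in> perms (Suc n)"
  shows "\<exists>p v. p \<in> perms n \<and> v \<in> {1..Suc n} \<and> s = ext p v"
proof -
  have len: "length s = Suc n" using s perms_length by blast
  then obtain b v where sb: "s = b @ [v]" by (metis length_Suc_conv_rev)
  have ds: "distinct s" and ss: "set s = {1..Suc n}" using s unfolding perms_def by auto
  have vin: "v \<in> {1..Suc n}" using ss sb by auto
  have vb: "v \<notin> set b" using ds sb by auto
  have db: "distinct b" using ds sb by auto
  have setb: "set b = {1..Suc n} - {v}" using ss sb ds by auto
  define p where "p = map (unsh v) b"
  have "map (sh v) p = b" unfolding p_def using vb
    by (induct b) (auto simp: sh_unsh)
  then have se: "s = ext p v" unfolding ext_def using sb by simp
  have "inj_on (unsh v) (set b)" using vb
    by (metis inj_onI sh_unsh)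
  then have dp: "distinct p" unfolding p_def using db by (simp add: distinct_map)
  have "set p = unsh v ` ({1..Suc n} - {v})" unfolding p_def using setb by simp
  also have "\<dots> = {1..n}"
  proof
    show "unsh v ` ({1..Suc n} - {v}) \<subseteq> {1..n}" using vin unfolding unsh_def by auto
    show "{1..n} \<subseteq> unsh v ` ({1..Suc n} - {v})"
    proof
      fix x assume x: "x \<in> {1..n}"
      have "sh v x \<in> {1..Suc n} - {v}" using x vin unfolding sh_def by auto
      moreover have "unsh v (sh v x) = x" by (rule unsh_sh)
      ultimately show "x \<in> unsh v ` ({1..Suc n} - {v})" by (metis image_eqI)
    qed
  qed
  finally have "p \<in> perms n" using dp unfolding perms_def by simp
  with se vin show ?thesis by blast
qed

lemma ext_bij: "bij_betw (\<lambda>(p,v). ext p v) (Sigma (perms n) (\<lambda>_. {1..Suc n})) (perms (Suc n))"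
  unfolding bij_betw_def
proof
  show "inj_on (\<lambda>(p, v). ext p v) (Sigma (perms n) (\<lambda>_. {1..Suc n}))"
    by (rule inj_onI) (auto dest: ext_inj simp: perms_length)
  show "(\<lambda>(p, v). ext p v) ` Sigma (perms n) (\<lambda>_. {1..Suc n}) = perms (Suc n)"
    using ext_perms ext_surj by fastforce
qed



definition occ3 :: "(nat \<Rightarrow> nat \<Rightarrow> nat \<Rightarrow> bool) \<Rightarrow> nat list \<Rightarrow> bool" where
  "occ3 R w = (\<exists>i j k. i < j \<and> j + 2 \<le> k \<and> k < length w \<and> R (w!i) (w!j) (w!k))"
definition Rs :: "(nat \<Rightarrow> nat \<Rightarrow> nat \<Rightarrow> bool) \<Rightarrow> nat \<Rightarrow> nat \<Rightarrow> nat \<Rightarrow> bool" where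
  "Rs R x y s = R (sh s x) (sh s y) s"
definition Fg :: "(nat \<Rightarrow> nat \<Rightarrow> nat \<Rightarrow> bool) \<Rightarrow> nat \<Rightarrow> nat list \<Rightarrow> nat set" where
  "Fg R g p = {s \<in> {1..Suc (length p)}. \<exists>i j. i < j \<and> j + g \<le> length p \<and> Rs R (p!i) (p!j) s}"
definition Al :: "(nat \<Rightarrow> nat \<Rightarrow> nat \<Rightarrow> bool) \<Rightarrow> nat list \<Rightarrow> nat set" where
  "Al R p = {1..Suc (length p)} - Fg R 2 p"
definition Al2 :: "(nat \<Rightarrow> nat \<Rightarrow> nat \<Rightarrow> bool) \<Rightarrow> nat list \<Rightarrow> nat set" where
  "Al2 R p = {1..Suc (length p)} - Fg R 1 p"
definition lab :: "(nat \<Rightarrow> nat \<Rightarrow> nat \<Rightarrow> bool) \<Rightarrow> nat list \<Rightarrow> nat \<times> nat" where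
  "lab R p = (card (Al R p), card (Al2 R p))"
definition Nv :: "(nat \<Rightarrow> nat \<Rightarrow> nat \<Rightarrow> bool) \<Rightarrow> nat list \<Rightarrow> nat \<Rightarrow> nat set" where
  "Nv R p v = {s \<in> {1..length p + 2}. \<exists>i<length p. Rs R (sh v (p!i)) v s}"
definition pre :: "nat \<Rightarrow> nat \<Rightarrow> nat set \<Rightarrow> nat set" where
  "pre v m X = {s \<in> {1..m+2}. rho v s \<in> X}"
definition Av :: "(nat \<Rightarrow> nat \<Rightarrow> nat \<Rightarrow> bool) \<Rightarrow> nat \<Rightarrow> nat list set" where
  "Av R n = {p \<in> perms n. \<not> occ3 R p}"

definition G :: "(nat \<times> nat \<Rightarrow> nat) \<Rightarrow> nat \<times> nat \<Rightarrow> nat" where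
  "G f L = (fst L - snd L) * f (snd L, snd L) + (\<Sum>t<snd L. f (Suc (snd L), Suc (snd L) - t))"

fun Phi :: "nat \<Rightarrow> (nat \<times> nat \<Rightarrow> nat) \<Rightarrow> nat" where
  "Phi 0 f = f (2,2)"
| "Phi (Suc m) f = Phi m (G f)"

lemma sh_lt_self: "sh s a < s \<longleftrightarrow> a < s" unfolding sh_def by auto
lemma self_lt_sh: "s < sh s a \<longleftrightarrow> s \<le> a" unfolding sh_def by auto
lemma sh_rho: "sh v x < s \<longleftrightarrow> x < rho v s" unfolding sh_def rho_def by auto
lemma sh_rho2: "s \<le> sh v x \<longleftrightarrow> rho v s \<le> x" using sh_rho[of v x s] by linarith

lemma rho_range: "v \<in> {1..Suc m} \<Longrightarrow> s \<in> {1..m+2} \<Longrightarrow> rho v s \<in> {1..Suc m}"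
  unfolding rho_def by auto

lemma Fg_mono: "g \<le> h \<Longrightarrow> Fg R h p \<subseteq> Fg R g p"
  unfolding Fg_def by fastforce

lemma Al2_sub_Al: "Al2 R p \<subseteq> Al R p"
  unfolding Al_def Al2_def using Fg_mono[of 1 2 R p] by auto

lemma finite_Al[simp]: "finite (Al R p)" unfolding Al_def by simp
lemma finite_Al2[simp]: "finite (Al2 R p)" unfolding Al2_def by simp
lemma finite_Nv[simp]: "finite (Nv R p v)" unfolding Nv_def by simp
lemma finite_pre[simp]: "finite (pre v m X)" unfolding pre_def by simp

definition up :: "nat \<Rightarrow> nat \<Rightarrow> nat" where
  "up v w = (if w < v then w else Suc w)"

lemma pre_eq:
  assumes X: "X \<subseteq> {1..Suc m}" and v: "v \<in> {1..Suc m}"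
  shows "pre v m X = up v ` X \<union> ({v} \<inter> X)"
proof
  show "pre v m X \<subseteq> up v ` X \<union> ({v} \<inter> X)"
  proof
    fix s assume s: "s \<in> pre v m X"
    then have s1: "s \<in> {1..m+2}" and r: "rho v s \<in> X" unfolding pre_def by auto
    show "s \<in> up v ` X \<union> ({v} \<inter> X)"
    proof (cases "s < v")
      case True
      then have "rho v s = s" "up v s = s" unfolding rho_def up_def by auto
      then show ?thesis using r by (metis UnI1 image_eqI)
    next
      case False
      show ?thesis
      proof (cases "s = v")
        case True
        then show ?thesis using r unfolding rho_def by auto
      next
        case False
        with \<open>\<not> s < v\<close> have "rho v s = s - 1" "up v (s - 1) = s" unfolding rho_def up_def by auto
        then show ?thesis using r by (metis UnI1 image_eqI)
      qed
    qed
  qed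
  show "up v ` X \<union> ({v} \<inter> X) \<subseteq> pre v m X"
  proof
    fix s assume "s \<in> up v ` X \<union> ({v} \<inter> X)"
    then show "s \<in> pre v m X"
    proof
      assume "s \<in> up v ` X"
      then obtain w where w: "w \<in> X" "s = up v w" by auto
      have "w \<in> {1..Suc m}" using w X by auto
      then show ?thesis using w v unfolding pre_def up_def rho_def by auto
    next
      assume "s \<in> {v} \<inter> X"
      then show ?thesis using v unfolding pre_def rho_def by auto
    qed
  qed
qed

lemma card_pre:
  assumes X: "X \<subseteq> {1..Suc m}" and v: "v \<in> {1..Suc m}"
  shows "card (pre v m X) = card X + (if v \<in> X then 1 else 0)"
proof -
  have fX: "finite X" using X finite_subset by blast
  have inj: "inj_on (up v) X" unfolding up_def by (rule inj_onI) (auto split: if_splits)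
  have nv: "v \<notin> up v ` X" unfolding up_def by auto
  have "card (pre v m X) = card (up v ` X) + card ({v} \<inter> X)"
  proof -
    have disj: "up v ` X \<inter> ({v} \<inter> X) = {}" by (auto simp: up_def split: if_splits)
    show ?thesis unfolding pre_eq[OF X v] using card_Un_disjoint[OF _ _ disj] fX by simp
  qed
  also have "\<dots> = card X + card ({v} \<inter> X)" using card_image[OF inj] by simp
  finally show ?thesis by auto
qed

locale ordinv =
  fixes R :: "nat \<Rightarrow> nat \<Rightarrow> nat \<Rightarrow> bool"
  assumes R_ord: "\<And>a b c a' b' c'. (a < b \<longleftrightarrow> a' < b') \<Longrightarrow> (b < a \<longleftrightarrow> b' < a') \<Longrightarrow>
      (a < c \<longleftrightarrow> a' < c') \<Longrightarrow> (c < a \<longleftrightarrow> c' < a') \<Longrightarrow> (b < c \<longleftrightarrow> b' < c') \<Longrightarrow> (c < b \<longleftrightarrow> c' < b')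
      \<Longrightarrow> R a b c = R a' b' c'"
begin

lemma R_sh: "R (sh v a) (sh v b) (sh v c) = R a b c"
  by (rule R_ord) auto

lemma Rs_rho: "Rs R (sh v x) (sh v y) s = Rs R x y (rho v s)"
  unfolding Rs_def
proof (rule R_ord)
  show "(sh s (sh v x) < s) = (sh (rho v s) x < rho v s)"
    by (simp add: sh_lt_self sh_rho)
  show "(s < sh s (sh v x)) = (rho v s < sh (rho v s) x)"
    by (simp add: self_lt_sh sh_rho2)
  show "(sh s (sh v y) < s) = (sh (rho v s) y < rho v s)"
    by (simp add: sh_lt_self sh_rho)
  show "(s < sh s (sh v y)) = (rho v s < sh (rho v s) y)"
    by (simp add: self_lt_sh sh_rho2)
qed simp_all

lemma occ_ext:
  "occ3 R (ext p v) \<longleftrightarrow> occ3 R p \<or> (\<exists>i j. i < j \<and> j + 2 \<le> length p \<and> Rs R (p!i) (p!j) v)"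
proof
  assume "occ3 R (ext p v)"
  then obtain i j k where o: "i < j" "j + 2 \<le> k" "k < Suc (length p)"
      "R (ext p v ! i) (ext p v ! j) (ext p v ! k)" unfolding occ3_def by auto
  show "occ3 R p \<or> (\<exists>i j. i < j \<and> j + 2 \<le> length p \<and> Rs R (p!i) (p!j) v)"
  proof (cases "k < length p")
    case True
    then have "R (p!i) (p!j) (p!k)" using o by (simp add: ext_nth R_sh)
    then have "occ3 R p" unfolding occ3_def using o True by blast
    then show ?thesis ..
  next
    case False
    then have k: "k = length p" using o by simp
    then have "Rs R (p!i) (p!j) v" using o unfolding Rs_def by (simp add: ext_nth ext_nth_last)
    then show ?thesis using o k by blast
  qed
next
  assume "occ3 R p \<or> (\<exists>i j. i < j \<and> j + 2 \<le> length p \<and> Rs R (p!i) (p!j) v)"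
  then show "occ3 R (ext p v)"
  proof
    assume "occ3 R p"
    then obtain i j k where o: "i < j" "j + 2 \<le> k" "k < length p"
      "R (p ! i) (p ! j) (p ! k)" unfolding occ3_def by auto
    then have "R (ext p v ! i) (ext p v ! j) (ext p v ! k)" by (simp add: ext_nth R_sh)
    then show ?thesis unfolding occ3_def using o by (metis ext_length less_SucI)
  next
    assume "\<exists>i j. i < j \<and> j + 2 \<le> length p \<and> Rs R (p!i) (p!j) v"
    then obtain i j where o: "i < j" "j + 2 \<le> length p" "Rs R (p!i) (p!j) v" by auto
    then have "R (ext p v ! i) (ext p v ! j) (ext p v ! length p)"
      unfolding Rs_def by (simp add: ext_nth ext_nth_last)
    then show ?thesis unfolding occ3_def using o by (metis ext_length lessI)
  qed
qed

lemma Al_ext: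
  assumes v: "v \<in> {1..Suc (length p)}"
  shows "Al R (ext p v) = pre v (length p) (Al2 R p)"
proof -
  let ?m = "length p"
  have "\<And>s. s \<in> {1..?m+2} \<Longrightarrow>
     (\<exists>i j. i < j \<and> j + 2 \<le> Suc ?m \<and> Rs R (ext p v!i) (ext p v!j) s) \<longleftrightarrow>
     (\<exists>i j. i < j \<and> j + 1 \<le> ?m \<and> Rs R (p!i) (p!j) (rho v s))"
  proof -
    fix s
    show "(\<exists>i j. i < j \<and> j + 2 \<le> Suc ?m \<and> Rs R (ext p v!i) (ext p v!j) s) \<longleftrightarrow>
     (\<exists>i j. i < j \<and> j + 1 \<le> ?m \<and> Rs R (p!i) (p!j) (rho v s))"
    proof
      assume "\<exists>i j. i < j \<and> j + 2 \<le> Suc ?m \<and> Rs R (ext p v!i) (ext p v!j) s"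
      then obtain i j where o: "i < j" "j + 2 \<le> Suc ?m" "Rs R (ext p v!i) (ext p v!j) s" by auto
      then have "Rs R (p!i) (p!j) (rho v s)" by (simp add: ext_nth Rs_rho)
      then show "\<exists>i j. i < j \<and> j + 1 \<le> ?m \<and> Rs R (p!i) (p!j) (rho v s)" using o by auto
    next
      assume "\<exists>i j. i < j \<and> j + 1 \<le> ?m \<and> Rs R (p!i) (p!j) (rho v s)"
      then obtain i j where o: "i < j" "j + 1 \<le> ?m" "Rs R (p!i) (p!j) (rho v s)" by auto
      then have "Rs R (ext p v!i) (ext p v!j) s" by (simp add: ext_nth Rs_rho)
      then show "\<exists>i j. i < j \<and> j + 2 \<le> Suc ?m \<and> Rs R (ext p v!i) (ext p v!j) s" using o by auto
    qed
  qed
  then show ?thesis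
    unfolding Al_def Al2_def Fg_def pre_def using rho_range[OF v] by auto
qed

lemma Al2_ext:
  assumes v: "v \<in> {1..Suc (length p)}"
  shows "Al2 R (ext p v) = pre v (length p) (Al2 R p) - Nv R p v"
proof -
  let ?m = "length p"
  have "\<And>s. s \<in> {1..?m+2} \<Longrightarrow>
     (\<exists>i j. i < j \<and> j + 1 \<le> Suc ?m \<and> Rs R (ext p v!i) (ext p v!j) s) \<longleftrightarrow>
     (\<exists>i j. i < j \<and> j + 1 \<le> ?m \<and> Rs R (p!i) (p!j) (rho v s)) \<or>
     (\<exists>i<?m. Rs R (sh v (p!i)) v s)"
  proof -
    fix s
    show "(\<exists>i j. i < j \<and> j + 1 \<le> Suc ?m \<and> Rs R (ext p v!i) (ext p v!j) s) \<longleftrightarrow>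
     (\<exists>i j. i < j \<and> j + 1 \<le> ?m \<and> Rs R (p!i) (p!j) (rho v s)) \<or>
     (\<exists>i<?m. Rs R (sh v (p!i)) v s)"
    proof
      assume "\<exists>i j. i < j \<and> j + 1 \<le> Suc ?m \<and> Rs R (ext p v!i) (ext p v!j) s"
      then obtain i j where o: "i < j" "j + 1 \<le> Suc ?m" "Rs R (ext p v!i) (ext p v!j) s" by auto
      show "(\<exists>i j. i < j \<and> j + 1 \<le> ?m \<and> Rs R (p!i) (p!j) (rho v s)) \<or>
           (\<exists>i<?m. Rs R (sh v (p!i)) v s)"
      proof (cases "j < ?m")
        case True
        then have "Rs R (p!i) (p!j) (rho v s)" using o by (simp add: ext_nth Rs_rho)
        then show ?thesis using o True by auto
      next
        case False
        then have j: "j = ?m" using o by simp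
        then have "Rs R (sh v (p!i)) v s" using o by (simp add: ext_nth ext_nth_last)
        then show ?thesis using o j by auto
      qed
    next
      assume "(\<exists>i j. i < j \<and> j + 1 \<le> ?m \<and> Rs R (p!i) (p!j) (rho v s)) \<or>
           (\<exists>i<?m. Rs R (sh v (p!i)) v s)"
      then show "\<exists>i j. i < j \<and> j + 1 \<le> Suc ?m \<and> Rs R (ext p v!i) (ext p v!j) s"
      proof
        assume "\<exists>i j. i < j \<and> j + 1 \<le> ?m \<and> Rs R (p!i) (p!j) (rho v s)"
        then obtain i j where o: "i < j" "j + 1 \<le> ?m" "Rs R (p!i) (p!j) (rho v s)" by auto
        then have "Rs R (ext p v!i) (ext p v!j) s" by (simp add: ext_nth Rs_rho)
        then show ?thesis using o by (intro exI[of _ i] exI[of _ j]) auto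
      next
        assume "\<exists>i<?m. Rs R (sh v (p!i)) v s"
        then obtain i where o: "i < ?m" "Rs R (sh v (p!i)) v s" by auto
        then have "Rs R (ext p v!i) (ext p v!?m) s" by (simp add: ext_nth ext_nth_last)
        then show ?thesis using o by auto
      qed
    qed
  qed
  note key = this
  show ?thesis
  proof (rule set_eqI)
    fix s
    show "s \<in> Al2 R (ext p v) \<longleftrightarrow> s \<in> pre v (length p) (Al2 R p) - Nv R p v"
    proof (cases "s \<in> {1..?m+2}")
      case True
      have "s \<in> Al2 R (ext p v) \<longleftrightarrow>
         \<not> (\<exists>i j. i < j \<and> j + 1 \<le> Suc ?m \<and> Rs R (ext p v!i) (ext p v!j) s)"
        unfolding Al2_def Fg_def using True by auto
      also have "\<dots> \<longleftrightarrow> \<not> ((\<exists>i j. i < j \<and> j + 1 \<le> ?m \<and> Rs R (p!i) (p!j) (rho v s)) \<or>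
           (\<exists>i<?m. Rs R (sh v (p!i)) v s))" using key[OF True] by simp
      also have "\<dots> \<longleftrightarrow> s \<in> pre v (length p) (Al2 R p) - Nv R p v"
        unfolding Al2_def Fg_def pre_def Nv_def using True rho_range[OF v True] by auto
      finally show ?thesis .
    next
      case False
      then show ?thesis unfolding Al2_def Fg_def pre_def Nv_def by auto
    qed
  qed
qed

end



context ordinv begin

lemma Al_range: "Al R p \<subseteq> {1..Suc (length p)}" unfolding Al_def by auto
lemma Al2_range: "Al2 R p \<subseteq> {1..Suc (length p)}" unfolding Al2_def by auto

lemma ext_Av_iff:
  assumes p: "p \<in> perms n" and v: "v \<in> {1..Suc n}"
  shows "ext p v \<in> Av R (Suc n) \<longleftrightarrow> p \<in> Av R n \<and> v \<in> Al R p"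
proof -
  have l: "length p = n" using p perms_length by blast
  have "ext p v \<in> perms (Suc n)" using ext_perms[OF p v] .
  then show ?thesis unfolding Av_def Al_def Fg_def using occ_ext[of p v] p v l by auto
qed

lemma Av_bij: "bij_betw (\<lambda>(p,v). ext p v) (Sigma (Av R n) (Al R)) (Av R (Suc n))"
proof (rule bij_betw_subset[OF ext_bij])
  show "Sigma (Av R n) (Al R) \<subseteq> Sigma (perms n) (\<lambda>_. {1..Suc n})"
    using Al_range perms_length unfolding Av_def by fastforce
  show "(\<lambda>(p, v). ext p v) ` Sigma (Av R n) (Al R) = Av R (Suc n)"
  proof
    show "(\<lambda>(p, v). ext p v) ` Sigma (Av R n) (Al R) \<subseteq> Av R (Suc n)"
    proof
      fix s assume "s \<in> (\<lambda>(p, v). ext p v) ` Sigma (Av R n) (Al R)"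
      then obtain p v where pv: "p \<in> Av R n" "v \<in> Al R p" "s = ext p v" by auto
      have p: "p \<in> perms n" using pv unfolding Av_def by auto
      have "v \<in> {1..Suc n}" using Al_range[of p] pv(2) perms_length[OF p] by auto
      then show "s \<in> Av R (Suc n)" using ext_Av_iff[OF p] pv by auto
    qed
    show "Av R (Suc n) \<subseteq> (\<lambda>(p, v). ext p v) ` Sigma (Av R n) (Al R)"
    proof
      fix s assume s: "s \<in> Av R (Suc n)"
      then obtain p v where pv: "p \<in> perms n" "v \<in> {1..Suc n}" "s = ext p v"
        using ext_surj unfolding Av_def by blast
      then have "p \<in> Av R n \<and> v \<in> Al R p" using ext_Av_iff s by blast
      then show "s \<in> (\<lambda>(p, v). ext p v) ` Sigma (Av R n) (Al R)" using pv by force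
    qed
  qed
qed

lemma finite_Av[simp]: "finite (Av R n)"
  unfolding Av_def using finite_perms by simp

lemma sum_Av_Suc:
  "(\<Sum>s\<in>Av R (Suc n). f (lab R s)) = (\<Sum>p\<in>Av R n. \<Sum>v\<in>Al R p. f (lab R (ext p v)))"
proof -
  have "(\<Sum>s\<in>Av R (Suc n). f (lab R s)) = (\<Sum>x\<in>Sigma (Av R n) (Al R). f (lab R ((\<lambda>(p,v). ext p v) x)))"
    using sum.reindex_bij_betw[OF Av_bij, of "\<lambda>s. f (lab R s)"] by simp
  also have "\<dots> = (\<Sum>p\<in>Av R n. \<Sum>v\<in>Al R p. f (lab R (ext p v)))"
    by (subst sum.Sigma) (auto simp: split_def)
  finally show ?thesis .
qed

lemma perms_1: "perms 1 = {[1]}"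
proof
  show "perms 1 \<subseteq> {[1]}"
  proof
    fix p assume p: "p \<in> perms 1"
    then have "length p = 1" using perms_length by blast
    then obtain x where "p = [x]" by (metis One_nat_def length_0_conv length_Suc_conv)
    moreover have "set p = {1}" using p unfolding perms_def by simp
    ultimately show "p \<in> {[1]}" by simp
  qed
  show "{[1]} \<subseteq> perms 1" unfolding perms_def by simp
qed

lemma Av_1: "Av R 1 = {[1]}"
  unfolding Av_def perms_1 occ3_def by auto

lemma lab_1: "lab R [1] = (2,2)"
proof -
  have "Fg R 2 [1] = {}" "Fg R 1 [1] = {}" unfolding Fg_def by auto
  then show ?thesis unfolding lab_def Al_def Al2_def by simp
qed

end

locale gtree = ordinv +
  assumes T1: "\<And>p m v. p \<in> perms m \<Longrightarrow> v \<in> Al R p \<Longrightarrow> v \<notin> Al2 R p \<Longrightarrow>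
                 Nv R p v \<inter> pre v m (Al2 R p) = {}"
  and T2: "\<And>p m. p \<in> perms m \<Longrightarrow>
     bij_betw (\<lambda>v. card (Nv R p v \<inter> pre v m (Al2 R p))) (Al2 R p) {..<card (Al2 R p)}"
begin

lemma sum_children:
  assumes p: "p \<in> perms m"
  shows "(\<Sum>v\<in>Al R p. f (lab R (ext p v))) = G f (lab R p)"
proof -
  have l: "length p = m" using p perms_length by blast
  let ?a = "card (Al R p)" and ?b = "card (Al2 R p)"
  let ?c = "\<lambda>v. card (Nv R p v \<inter> pre v m (Al2 R p))"
  have sub: "Al2 R p \<subseteq> Al R p" by (rule Al2_sub_Al)
  have A2r: "Al2 R p \<subseteq> {1..Suc m}" using Al2_range[of p] l by simp
  have Ar: "Al R p \<subseteq> {1..Suc m}" using Al_range[of p] l by simp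
  have lab1: "lab R (ext p v) = (?b, ?b)" if v: "v \<in> Al R p - Al2 R p" for v
  proof -
    have vr: "v \<in> {1..Suc (length p)}" using v Ar l by auto
    have "Al R (ext p v) = pre v m (Al2 R p)" using Al_ext[OF vr] l by simp
    moreover have "card (pre v m (Al2 R p)) = ?b" using card_pre[OF A2r] vr v l by simp
    moreover have "Al2 R (ext p v) = pre v m (Al2 R p)"
      using Al2_ext[OF vr] T1[OF p, of v] v l by auto
    ultimately show ?thesis unfolding lab_def by simp
  qed
  have lab2: "lab R (ext p v) = (Suc ?b, Suc ?b - ?c v)" if v: "v \<in> Al2 R p" for v
  proof -
    have vr: "v \<in> {1..Suc (length p)}" using v A2r l by auto
    have e1: "Al R (ext p v) = pre v m (Al2 R p)" using Al_ext[OF vr] l by simp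
    have c1: "card (pre v m (Al2 R p)) = Suc ?b" using card_pre[OF A2r] vr v l by simp
    have e2: "Al2 R (ext p v) = pre v m (Al2 R p) - (Nv R p v \<inter> pre v m (Al2 R p))"
      using Al2_ext[OF vr] l by auto
    have "card (Al2 R (ext p v)) = Suc ?b - ?c v"
      unfolding e2 by (subst card_Diff_subset) (auto simp: c1)
    then show ?thesis unfolding lab_def using e1 c1 by simp
  qed
  have "(\<Sum>v\<in>Al R p. f (lab R (ext p v))) =
        (\<Sum>v\<in>Al R p - Al2 R p. f (lab R (ext p v))) + (\<Sum>v\<in>Al2 R p. f (lab R (ext p v)))"
    using sum.subset_diff[OF sub] by simp
  also have "(\<Sum>v\<in>Al R p - Al2 R p. f (lab R (ext p v))) = (?a - ?b) * f (?b, ?b)"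
    using lab1 card_Diff_subset[OF _ sub] by simp
  also have "(\<Sum>v\<in>Al2 R p. f (lab R (ext p v))) = (\<Sum>v\<in>Al2 R p. f (Suc ?b, Suc ?b - ?c v))"
    using lab2 by simp
  also have "\<dots> = (\<Sum>t<?b. f (Suc ?b, Suc ?b - t))"
    using sum.reindex_bij_betw[OF T2[OF p], of "\<lambda>t. f (Suc ?b, Suc ?b - t)"] by simp
  finally show ?thesis unfolding G_def lab_def by simp
qed

lemma main_sum: "(\<Sum>p\<in>Av R (Suc m). f (lab R p)) = Phi m f"
proof (induction m arbitrary: f)
  case 0
  then show ?case using Av_1 lab_1 by simp
next
  case (Suc m)
  have "(\<Sum>p\<in>Av R (Suc (Suc m)). f (lab R p)) = (\<Sum>p\<in>Av R (Suc m). \<Sum>v\<in>Al R p. f (lab R (ext p v)))"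
    by (rule sum_Av_Suc)
  also have "\<dots> = (\<Sum>p\<in>Av R (Suc m). G f (lab R p))"
    by (rule sum.cong) (auto simp: Av_def intro: sum_children)
  also have "\<dots> = Phi m (G f)" by (rule Suc.IH)
  finally show ?case by simp
qed

lemma card_Av: "card (Av R (Suc m)) = Phi m (\<lambda>_. 1)"
  using main_sum[of "\<lambda>_. 1" m] by simp

end



lemma bij_by_inj:
  assumes "finite A" "inj_on c A" "\<And>v. v \<in> A \<Longrightarrow> c v < card A"
  shows "bij_betw c A {..<card A}"
proof -
  have "c ` A \<subseteq> {..<card A}" using assms(3) by auto
  moreover have "card (c ` A) = card {..<card A}" using card_image[OF assms(2)] by simp
  ultimately have "c ` A = {..<card A}" by (simp add: card_subset_eq)
  then show ?thesis using assms(2) unfolding bij_betw_def by simp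
qed

lemma perms_ex_iff: "p \<in> perms m \<Longrightarrow> (\<exists>i<m. P (p!i)) \<longleftrightarrow> (\<exists>x\<in>{1..m}. P x)"
  using perms_nth perms_ex by metis

lemma card_lt_psubset: "finite B \<Longrightarrow> A \<subseteq> B \<Longrightarrow> x \<in> B \<Longrightarrow> x \<notin> A \<Longrightarrow> card A < card B"
  by (metis psubsetI psubset_card_mono)

definition R1 :: "nat \<Rightarrow> nat \<Rightarrow> nat \<Rightarrow> bool" where "R1 x y z = (z < y \<and> y < x)"

lemma ordinv_R1: "ordinv R1"
  unfolding ordinv_def R1_def by auto

lemma Rs_R1: "Rs R1 x y s \<longleftrightarrow> y < x \<and> s \<le> y"
  unfolding Rs_def R1_def sh_def by auto

lemma Nv_R1:
  assumes p: "p \<in> perms m" and v: "v \<in> {1..Suc m}"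
  shows "Nv R1 p v = (if v \<le> m then {1..v} else {})"
proof -
  have l: "length p = m" using p perms_length by blast
  have "Nv R1 p v = {s \<in> {1..m+2}. \<exists>x\<in>{1..m}. Rs R1 (sh v x) v s}"
    unfolding Nv_def l using perms_ex_iff[OF p, of "\<lambda>x. Rs R1 (sh v x) v _"] by simp
  also have "\<dots> = (if v \<le> m then {1..v} else {})"
    unfolding Rs_R1 sh_def using v by auto
  finally show ?thesis .
qed

interpretation I1: gtree R1
proof (unfold_locales)
  show "\<And>a b c a' b' c'. (a < b \<longleftrightarrow> a' < b') \<Longrightarrow> (b < a \<longleftrightarrow> b' < a') \<Longrightarrow>
      (a < c \<longleftrightarrow> a' < c') \<Longrightarrow> (c < a \<longleftrightarrow> c' < a') \<Longrightarrow> (b < c \<longleftrightarrow> b' < c') \<Longrightarrow> (c < b \<longleftrightarrow> c' < b')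
      \<Longrightarrow> R1 a b c = R1 a' b' c'" unfolding R1_def by auto
next
  fix p m v
  assume p: "p \<in> perms m" and vA: "v \<in> Al R1 p" and vn: "v \<notin> Al2 R1 p"
  have l: "length p = m" using p perms_length by blast
  have v: "v \<in> {1..Suc m}" using vA l unfolding Al_def by auto
  then obtain i j where ij: "i < j" "j + 1 \<le> m" "Rs R1 (p!i) (p!j) v"
    using vn l unfolding Al2_def Fg_def by auto
  have yx: "p!j < p!i" "v \<le> p!j" using ij(3) unfolding Rs_R1 by auto
  have pj: "p!j \<le> m" using perms_nth[OF p, of j] ij by auto
  show "Nv R1 p v \<inter> pre v m (Al2 R1 p) = {}"
  proof -
    have "s \<notin> pre v m (Al2 R1 p)" if s: "s \<in> {1..v}" for s
    proof -
      have "rho v s = s" using s unfolding rho_def by auto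
      moreover have "Rs R1 (p!i) (p!j) s" using yx s unfolding Rs_R1 by auto
      then have "s \<in> Fg R1 1 p" unfolding Fg_def using ij s l pj yx by auto
      ultimately show ?thesis unfolding pre_def Al2_def by auto
    qed
    then show ?thesis using Nv_R1[OF p v] by auto
  qed
next
  fix p m
  assume p: "p \<in> perms m"
  have l: "length p = m" using p perms_length by blast
  let ?A = "Al2 R1 p"
  have Ar: "?A \<subseteq> {1..Suc m}" unfolding Al2_def l by auto
  have fA: "finite ?A" by simp
  have top: "Suc m \<in> ?A"
  proof -
    have "\<not> Rs R1 (p!i) (p!j) (Suc m)" if "j < m" for i j
      using perms_nth[OF p that] unfolding Rs_R1 by auto
    then show ?thesis unfolding Al2_def Fg_def l by auto
  qed
  define c where "c v = (if v \<le> m then card {u \<in> ?A. u \<le> v} else 0)" for v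
  have ceq: "card (Nv R1 p v \<inter> pre v m ?A) = c v" if v: "v \<in> ?A" for v
  proof (cases "v \<le> m")
    case True
    have vr: "v \<in> {1..Suc m}" using v Ar by auto
    have "Nv R1 p v \<inter> pre v m ?A = {u \<in> ?A. u \<le> v}"
      unfolding Nv_R1[OF p vr] pre_def rho_def using True Ar by auto
    then show ?thesis unfolding c_def using True by simp
  next
    case False
    have vr: "v \<in> {1..Suc m}" using v Ar by auto
    show ?thesis unfolding Nv_R1[OF p vr] c_def using False by simp
  qed
  have "bij_betw c ?A {..<card ?A}"
  proof (rule bij_by_inj[OF fA])
    show "inj_on c ?A"
    proof (rule linorder_inj_onI)
      fix x y assume xy: "x < y" "x \<in> ?A" "y \<in> ?A"
      have xm: "x \<le> m" using xy Ar by auto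
      show "c x \<noteq> c y"
      proof (cases "y \<le> m")
        case True
        have "card {u \<in> ?A. u \<le> x} < card {u \<in> ?A. u \<le> y}"
          by (rule card_lt_psubset[where x=y]) (use xy in auto)
        then show ?thesis unfolding c_def using xm True by simp
      next
        case False
        have "0 < card {u \<in> ?A. u \<le> x}" using xy(2) by (subst card_gt_0_iff) auto
        then have "0 < c x" unfolding c_def using xm by simp
        moreover have "c y = 0" unfolding c_def using False by simp
        ultimately show ?thesis by simp
      qed
    qed auto
    show "c v < card ?A" if v: "v \<in> ?A" for v
    proof (cases "v \<le> m")
      case True
      have "card {u \<in> ?A. u \<le> v} < card ?A"
        by (rule card_lt_psubset[where x="Suc m"]) (use True top in auto)
      then show ?thesis unfolding c_def using True by simp
    next
      case False
      then show ?thesis unfolding c_def using top by (auto simp add: card_gt_0_iff)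
    qed
  qed
  then show "bij_betw (\<lambda>v. card (Nv R1 p v \<inter> pre v m ?A)) ?A {..<card ?A}"
    by (rule bij_betw_cong[THEN iffD1, rotated]) (simp add: ceq)
qed



definition R2 :: "nat \<Rightarrow> nat \<Rightarrow> nat \<Rightarrow> bool" where "R2 x y z = (y < z \<and> z < x)"

lemma Rs_R2: "Rs R2 x y s \<longleftrightarrow> y < s \<and> s \<le> x"
  unfolding Rs_def R2_def sh_def by auto

lemma Nv_R2:
  assumes p: "p \<in> perms m" and v: "v \<in> {1..Suc m}"
  shows "Nv R2 p v = {Suc v..Suc m}"
proof -
  have l: "length p = m" using p perms_length by blast
  have "Nv R2 p v = {s \<in> {1..m+2}. \<exists>x\<in>{1..m}. Rs R2 (sh v x) v s}"
    unfolding Nv_def l using perms_ex_iff[OF p, of "\<lambda>x. Rs R2 (sh v x) v _"] by simp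
  also have "\<dots> = {Suc v..Suc m}"
  proof
    show "{s \<in> {1..m + 2}. \<exists>x\<in>{1..m}. Rs R2 (sh v x) v s} \<subseteq> {Suc v..Suc m}"
      unfolding Rs_R2 sh_def using v by (auto split: if_splits)
    show "{Suc v..Suc m} \<subseteq> {s \<in> {1..m + 2}. \<exists>x\<in>{1..m}. Rs R2 (sh v x) v s}"
    proof
      fix s assume s: "s \<in> {Suc v..Suc m}"
      then have "Rs R2 (sh v m) v s" unfolding Rs_R2 sh_def by auto
      moreover have "m \<in> {1..m}" using s v by auto
      ultimately show "s \<in> {s \<in> {1..m + 2}. \<exists>x\<in>{1..m}. Rs R2 (sh v x) v s}" using s by auto
    qed
  qed
  finally show ?thesis .
qed

interpretation I2: gtree R2
proof (unfold_locales)
  show "\<And>a b c a' b' c'. (a < b \<longleftrightarrow> a' < b') \<Longrightarrow> (b < a \<longleftrightarrow> b' < a') \<Longrightarrow>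
      (a < c \<longleftrightarrow> a' < c') \<Longrightarrow> (c < a \<longleftrightarrow> c' < a') \<Longrightarrow> (b < c \<longleftrightarrow> b' < c') \<Longrightarrow> (c < b \<longleftrightarrow> c' < b')
      \<Longrightarrow> R2 a b c = R2 a' b' c'" unfolding R2_def by auto
next
  fix p m v
  assume p: "p \<in> perms m" and vA: "v \<in> Al R2 p" and vn: "v \<notin> Al2 R2 p"
  have l: "length p = m" using p perms_length by blast
  have v: "v \<in> {1..Suc m}" using vA l unfolding Al_def by auto
  then obtain i j where ij: "i < j" "j + 1 \<le> m" "Rs R2 (p!i) (p!j) v"
    using vn l unfolding Al2_def Fg_def by auto
  have jm: "\<not> j + 2 \<le> m" using vA ij v l unfolding Al_def Fg_def by auto
  then have j: "j = m - 1" using ij by auto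
  have yx: "p!j < v" "v \<le> p!i" using ij(3) unfolding Rs_R2 by auto
  have pi: "p!i \<le> m" using perms_nth[OF p, of i] ij by auto
  obtain q where q: "q < m" "p!q = m" using perms_ex[OF p, of m] ij by auto
  have qj: "q < j"
  proof -
    have "q \<noteq> j" using q yx pi by auto
    then show ?thesis using q j by auto
  qed
  show "Nv R2 p v \<inter> pre v m (Al2 R2 p) = {}"
  proof -
    have "s \<notin> pre v m (Al2 R2 p)" if s: "s \<in> {Suc v..Suc m}" for s
    proof -
      have "rho v s = s - 1" using s unfolding rho_def by auto
      moreover have "Rs R2 (p!q) (p!j) (s - 1)" using yx s q unfolding Rs_R2 by auto
      then have "s - 1 \<in> Fg R2 1 p" unfolding Fg_def using qj ij s l v by auto
      ultimately show ?thesis unfolding pre_def Al2_def by auto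
    qed
    then show ?thesis using Nv_R2[OF p v] by auto
  qed
next
  fix p m
  assume p: "p \<in> perms m"
  have l: "length p = m" using p perms_length by blast
  let ?A = "Al2 R2 p"
  have Ar: "?A \<subseteq> {1..Suc m}" unfolding Al2_def l by auto
  have fA: "finite ?A" by simp
  have top: "Suc m \<in> ?A"
  proof -
    have "\<not> Rs R2 (p!i) (p!j) (Suc m)" if "i < m" for i j
      using perms_nth[OF p that] unfolding Rs_R2 by auto
    then show ?thesis unfolding Al2_def Fg_def l by auto
  qed
  define c where "c v = card {u \<in> ?A. v \<le> u \<and> u \<le> m}" for v
  have ceq: "card (Nv R2 p v \<inter> pre v m ?A) = c v" if v: "v \<in> ?A" for v
  proof -
    have vr: "v \<in> {1..Suc m}" using v Ar by auto
    have "Nv R2 p v \<inter> pre v m ?A = Suc ` {u \<in> ?A. v \<le> u \<and> u \<le> m}"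
    proof
      show "Nv R2 p v \<inter> pre v m ?A \<subseteq> Suc ` {u \<in> ?A. v \<le> u \<and> u \<le> m}"
      proof
        fix s assume s: "s \<in> Nv R2 p v \<inter> pre v m ?A"
        then have s1: "s \<in> {Suc v..Suc m}" "rho v s \<in> ?A"
          unfolding Nv_R2[OF p vr] pre_def by auto
        then have "rho v s = s - 1" unfolding rho_def by auto
        then have "s - 1 \<in> {u \<in> ?A. v \<le> u \<and> u \<le> m}" using s1 by auto
        moreover have "s = Suc (s - 1)" using s1 by auto
        ultimately show "s \<in> Suc ` {u \<in> ?A. v \<le> u \<and> u \<le> m}" by (metis image_eqI)
      qed
      show "Suc ` {u \<in> ?A. v \<le> u \<and> u \<le> m} \<subseteq> Nv R2 p v \<inter> pre v m ?A"
        unfolding Nv_R2[OF p vr] pre_def rho_def using vr by auto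
    qed
    then show ?thesis unfolding c_def by (simp add: card_image)
  qed
  have "bij_betw c ?A {..<card ?A}"
  proof (rule bij_by_inj[OF fA])
    show "inj_on c ?A"
    proof (rule linorder_inj_onI)
      fix x y assume xy: "x < y" "x \<in> ?A" "y \<in> ?A"
      have xm: "x \<le> m" using xy Ar by auto
      have "card {u \<in> ?A. y \<le> u \<and> u \<le> m} < card {u \<in> ?A. x \<le> u \<and> u \<le> m}"
        by (rule card_lt_psubset[where x=x]) (use xy xm in auto)
      then show "c x \<noteq> c y" unfolding c_def by simp
    qed auto
    show "c v < card ?A" if v: "v \<in> ?A" for v
    proof -
      have "card {u \<in> ?A. v \<le> u \<and> u \<le> m} < card ?A"
        by (rule card_lt_psubset[where x="Suc m"]) (use top in auto)
      then show ?thesis unfolding c_def by simp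
    qed
  qed
  then show "bij_betw (\<lambda>v. card (Nv R2 p v \<inter> pre v m ?A)) ?A {..<card ?A}"
    by (rule bij_betw_cong[THEN iffD1, rotated]) (simp add: ceq)
qed

definition R3 :: "nat \<Rightarrow> nat \<Rightarrow> nat \<Rightarrow> bool" where "R3 x y z = (y < x \<and> x < z)"

lemma Rs_R3: "Rs R3 x y s \<longleftrightarrow> y < x \<and> x < s"
  unfolding Rs_def R3_def sh_def by auto

lemma Nv_R3:
  assumes p: "p \<in> perms m" and v: "v \<in> {1..Suc m}"
  shows "Nv R3 p v = {Suc (Suc v)..m+2}"
proof -
  have l: "length p = m" using p perms_length by blast
  have "Nv R3 p v = {s \<in> {1..m+2}. \<exists>x\<in>{1..m}. Rs R3 (sh v x) v s}"
    unfolding Nv_def l using perms_ex_iff[OF p, of "\<lambda>x. Rs R3 (sh v x) v _"] by simp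
  also have "\<dots> = {Suc (Suc v)..m+2}"
  proof
    show "{s \<in> {1..m + 2}. \<exists>x\<in>{1..m}. Rs R3 (sh v x) v s} \<subseteq> {Suc (Suc v)..m+2}"
      unfolding Rs_R3 sh_def using v by (auto split: if_splits)
    show "{Suc (Suc v)..m+2} \<subseteq> {s \<in> {1..m + 2}. \<exists>x\<in>{1..m}. Rs R3 (sh v x) v s}"
    proof
      fix s assume s: "s \<in> {Suc (Suc v)..m+2}"
      then have "Rs R3 (sh v v) v s" unfolding Rs_R3 sh_def by auto
      moreover have "v \<in> {1..m}" using s v by auto
      ultimately show "s \<in> {s \<in> {1..m + 2}. \<exists>x\<in>{1..m}. Rs R3 (sh v x) v s}" using s by auto
    qed
  qed
  finally show ?thesis .
qed

interpretation I3: gtree R3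
proof (unfold_locales)
  show "\<And>a b c a' b' c'. (a < b \<longleftrightarrow> a' < b') \<Longrightarrow> (b < a \<longleftrightarrow> b' < a') \<Longrightarrow>
      (a < c \<longleftrightarrow> a' < c') \<Longrightarrow> (c < a \<longleftrightarrow> c' < a') \<Longrightarrow> (b < c \<longleftrightarrow> b' < c') \<Longrightarrow> (c < b \<longleftrightarrow> c' < b')
      \<Longrightarrow> R3 a b c = R3 a' b' c'" unfolding R3_def by auto
next
  fix p m v
  assume p: "p \<in> perms m" and vA: "v \<in> Al R3 p" and vn: "v \<notin> Al2 R3 p"
  have l: "length p = m" using p perms_length by blast
  have v: "v \<in> {1..Suc m}" using vA l unfolding Al_def by auto
  then obtain i j where ij: "i < j" "j + 1 \<le> m" "Rs R3 (p!i) (p!j) v"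
    using vn l unfolding Al2_def Fg_def by auto
  have yx: "p!j < p!i" "p!i < v" using ij(3) unfolding Rs_R3 by auto
  show "Nv R3 p v \<inter> pre v m (Al2 R3 p) = {}"
  proof -
    have "s \<notin> pre v m (Al2 R3 p)" if s: "s \<in> {Suc (Suc v)..m+2}" for s
    proof -
      have "rho v s = s - 1" using s unfolding rho_def by auto
      moreover have "Rs R3 (p!i) (p!j) (s - 1)" using yx s unfolding Rs_R3 by auto
      then have "s - 1 \<in> Fg R3 1 p" unfolding Fg_def using ij s l v by auto
      ultimately show ?thesis unfolding pre_def Al2_def by auto
    qed
    then show ?thesis using Nv_R3[OF p v] by auto
  qed
next
  fix p m
  assume p: "p \<in> perms m"
  have l: "length p = m" using p perms_length by blast
  let ?A = "Al2 R3 p"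
  have Ar: "?A \<subseteq> {1..Suc m}" unfolding Al2_def l by auto
  have fA: "finite ?A" by simp
  define c where "c v = card {u \<in> ?A. v < u}" for v
  have ceq: "card (Nv R3 p v \<inter> pre v m ?A) = c v" if v: "v \<in> ?A" for v
  proof -
    have vr: "v \<in> {1..Suc m}" using v Ar by auto
    have "Nv R3 p v \<inter> pre v m ?A = Suc ` {u \<in> ?A. v < u}"
    proof
      show "Nv R3 p v \<inter> pre v m ?A \<subseteq> Suc ` {u \<in> ?A. v < u}"
      proof
        fix s assume s: "s \<in> Nv R3 p v \<inter> pre v m ?A"
        then have s1: "s \<in> {Suc (Suc v)..m+2}" "rho v s \<in> ?A"
          unfolding Nv_R3[OF p vr] pre_def by auto
        then have "rho v s = s - 1" unfolding rho_def by auto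
        then have "s - 1 \<in> {u \<in> ?A. v < u}" using s1 by auto
        moreover have "s = Suc (s - 1)" using s1 by auto
        ultimately show "s \<in> Suc ` {u \<in> ?A. v < u}" by (metis image_eqI)
      qed
      show "Suc ` {u \<in> ?A. v < u} \<subseteq> Nv R3 p v \<inter> pre v m ?A"
        unfolding Nv_R3[OF p vr] pre_def rho_def using vr Ar by auto
    qed
    then show ?thesis unfolding c_def by (simp add: card_image)
  qed
  have "bij_betw c ?A {..<card ?A}"
  proof (rule bij_by_inj[OF fA])
    show "inj_on c ?A"
    proof (rule linorder_inj_onI)
      fix x y assume xy: "x < y" "x \<in> ?A" "y \<in> ?A"
      have "card {u \<in> ?A. y < u} < card {u \<in> ?A. x < u}"
        by (rule card_lt_psubset[where x=y]) (use xy in auto)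
      then show "c x \<noteq> c y" unfolding c_def by simp
    qed auto
    show "c v < card ?A" if v: "v \<in> ?A" for v
    proof -
      have "card {u \<in> ?A. v < u} < card ?A"
        by (rule card_lt_psubset[where x=v]) (use v in auto)
      then show ?thesis unfolding c_def by simp
    qed
  qed
  then show "bij_betw (\<lambda>v. card (Nv R3 p v \<inter> pre v m ?A)) ?A {..<card ?A}"
    by (rule bij_betw_cong[THEN iffD1, rotated]) (simp add: ceq)
qed



definition V :: "nat list \<Rightarrow> nat \<Rightarrow> nat \<Rightarrow> nat \<Rightarrow> nat \<Rightarrow> nat" where
  "V p i j k q = p ! (if q = 1 then i else if q = 2 then j else k)"

lemma cp_occ:
  assumes abc: "a \<in> {1,2,4}" "b \<in> {1,2,4}" "c \<in> {1,2,4}"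
  shows "contains_pop 4 (chain_pop a b c d) p \<longleftrightarrow>
    (\<exists>i j k. i < j \<and> j + 2 \<le> k \<and> k < length p \<and> V p i j k c < V p i j k b \<and> V p i j k b < V p i j k a)"
proof
  assume "contains_pop 4 (chain_pop a b c d) p"
  then obtain \<iota> where sm: "strict_mono_on {1..4} \<iota>" and lt: "\<forall>j\<in>{1..4}. \<iota> j < length p"
    and rel: "\<forall>j\<in>{1..4}. \<forall>m\<in>{1..4}. chain_pop a b c d j m \<longrightarrow> p ! (\<iota> j) < p ! (\<iota> m)"
    unfolding contains_pop_def by blast
  have m12: "\<iota> 1 < \<iota> 2" and m23: "\<iota> 2 < \<iota> 3" and m34: "\<iota> 3 < \<iota> (4::nat)"
    using strict_mono_onD[OF sm] by auto
  have l4: "\<iota> 4 < length p" using lt by auto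
  have Vq: "V p (\<iota> 1) (\<iota> 2) (\<iota> 4) q = p ! (\<iota> q)" if "q \<in> {1,2,4}" for q
    using that unfolding V_def by auto
  have cin: "c \<in> {1..4}" "b \<in> {1..4}" "a \<in> {1..4}" using abc by auto
  have i1: "p ! (\<iota> c) < p ! (\<iota> b)"
    using bspec[OF bspec[OF rel cin(1)] cin(2)] unfolding chain_pop_def by simp
  have i2: "p ! (\<iota> b) < p ! (\<iota> a)"
    using bspec[OF bspec[OF rel cin(2)] cin(3)] unfolding chain_pop_def by simp
  have "\<iota> 1 < \<iota> 2" "\<iota> 2 + 2 \<le> \<iota> 4" "\<iota> 4 < length p"
    "V p (\<iota> 1) (\<iota> 2) (\<iota> 4) c < V p (\<iota> 1) (\<iota> 2) (\<iota> 4) b"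
    "V p (\<iota> 1) (\<iota> 2) (\<iota> 4) b < V p (\<iota> 1) (\<iota> 2) (\<iota> 4) a"
    using m12 m23 m34 l4 i1 i2 Vq[OF abc(1)] Vq[OF abc(2)] Vq[OF abc(3)] by simp_all
  then show "\<exists>i j k. i < j \<and> j + 2 \<le> k \<and> k < length p \<and> V p i j k c < V p i j k b \<and> V p i j k b < V p i j k a"
    by blast
next
  assume "\<exists>i j k. i < j \<and> j + 2 \<le> k \<and> k < length p \<and> V p i j k c < V p i j k b \<and> V p i j k b < V p i j k a"
  then obtain i j k where o: "i < j" "j + 2 \<le> k" "k < length p"
     "V p i j k c < V p i j k b" "V p i j k b < V p i j k a" by blast
  define \<iota> where "\<iota> q = (if q = 1 then i else if q = 2 then j else if q = 3 then Suc j else k)" for q :: nat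
  have sm: "strict_mono_on {1..4} \<iota>"
  proof (rule strict_mono_onI)
    fix r s :: nat assume "r \<in> {1..4}" "s \<in> {1..4}" "r < s"
    then have "r = 1 \<and> s = 2 \<or> r = 1 \<and> s = 3 \<or> r = 1 \<and> s = 4 \<or> r = 2 \<and> s = 3 \<or> r = 2 \<and> s = 4 \<or> r = 3 \<and> s = 4"
      by auto
    then show "\<iota> r < \<iota> s" unfolding \<iota>_def using o by auto
  qed
  have lt: "\<forall>q\<in>{1..4}. \<iota> q < length p" unfolding \<iota>_def using o by auto
  have Vq: "V p i j k q = p ! (\<iota> q)" if "q \<in> {1,2,4}" for q
    using that unfolding V_def \<iota>_def by auto
  have i1: "p ! (\<iota> c) < p ! (\<iota> b)" using o(4) Vq[OF abc(3)] Vq[OF abc(2)] by simp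
  have i2: "p ! (\<iota> b) < p ! (\<iota> a)" using o(5) Vq[OF abc(1)] Vq[OF abc(2)] by simp
  have "\<forall>q\<in>{1..4}. \<forall>r\<in>{1..4}. chain_pop a b c d q r \<longrightarrow> p ! (\<iota> q) < p ! (\<iota> r)"
  proof (intro ballI impI)
    fix q r assume "chain_pop a b c d q r"
    then have "(q = c \<and> r = b) \<or> (q = b \<and> r = a) \<or> (q = c \<and> r = a)" unfolding chain_pop_def by simp
    then show "p ! (\<iota> q) < p ! (\<iota> r)" using i1 i2 by (elim disjE) auto
  qed
  then show "contains_pop 4 (chain_pop a b c d) p"
    unfolding contains_pop_def using sm lt by blast
qed


lemma cp_cong:
  assumes "\<And>q r. q \<in> {1..k} \<Longrightarrow> r \<in> {1..k} \<Longrightarrow> lt q r = lt' q r"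
  shows "contains_pop k lt p = contains_pop k lt' p"
  unfolding contains_pop_def using assms by auto

lemma cp_rev1:
  assumes "contains_pop k lt (rev p)"
  shows "contains_pop k (\<lambda>q r. lt (Suc k - q) (Suc k - r)) p"
proof -
  obtain \<iota> where sm: "strict_mono_on {1..k} \<iota>" and lt: "\<forall>j\<in>{1..k}. \<iota> j < length p"
    and rel: "\<forall>j\<in>{1..k}. \<forall>m\<in>{1..k}. lt j m \<longrightarrow> rev p ! (\<iota> j) < rev p ! (\<iota> m)"
    using assms unfolding contains_pop_def by auto
  define \<kappa> where "\<kappa> q = length p - 1 - \<iota> (Suc k - q)" for q
  have ran: "\<And>j. j \<in> {1..k} \<Longrightarrow> \<iota> (Suc k - j) < length p"
  proof -
    fix j :: nat assume "j \<in> {1..k}"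
    then have "Suc k - j \<in> {1..k}" by auto
    then show "\<iota> (Suc k - j) < length p" using lt by blast
  qed
  have sm2: "strict_mono_on {1..k} \<kappa>"
  proof (rule strict_mono_onI)
    fix r s assume rs: "r \<in> {1..k}" "s \<in> {1..k}" "r < s"
    then have "\<iota> (Suc k - s) < \<iota> (Suc k - r)" using strict_mono_onD[OF sm] by auto
    moreover have "Suc k - r \<in> {1..k}" using rs by auto
    then have "\<iota> (Suc k - r) < length p" using lt by blast
    ultimately show "\<kappa> r < \<kappa> s" unfolding \<kappa>_def by auto
  qed
  have lt2: "\<forall>j\<in>{1..k}. \<kappa> j < length p"
  proof
    fix j assume "j \<in> {1..k}"
    then have "\<iota> (Suc k - j) < length p" using ran by blast
    then show "\<kappa> j < length p" unfolding \<kappa>_def by auto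
  qed
  have rn: "rev p ! (\<iota> (Suc k - j)) = p ! (\<kappa> j)" if "j \<in> {1..k}" for j
  proof -
    have "\<iota> (Suc k - j) < length p" using ran that by blast
    then show ?thesis unfolding \<kappa>_def by (simp add: rev_nth)
  qed
  have "\<forall>j\<in>{1..k}. \<forall>m\<in>{1..k}. lt (Suc k - j) (Suc k - m) \<longrightarrow> p ! (\<kappa> j) < p ! (\<kappa> m)"
  proof (intro ballI impI)
    fix j m assume jm: "j \<in> {1..k}" "m \<in> {1..k}" "lt (Suc k - j) (Suc k - m)"
    have "Suc k - j \<in> {1..k}" "Suc k - m \<in> {1..k}" using jm by auto
    then have "rev p ! (\<iota> (Suc k - j)) < rev p ! (\<iota> (Suc k - m))" using rel jm by blast
    then show "p ! (\<kappa> j) < p ! (\<kappa> m)" using rn jm by simp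
  qed
  then show ?thesis unfolding contains_pop_def using sm2 lt2 by blast
qed

lemma cp_rev:
  "contains_pop k lt (rev p) \<longleftrightarrow> contains_pop k (\<lambda>q r. lt (Suc k - q) (Suc k - r)) p"
proof
  assume "contains_pop k lt (rev p)"
  then show "contains_pop k (\<lambda>q r. lt (Suc k - q) (Suc k - r)) p" by (rule cp_rev1)
next
  assume "contains_pop k (\<lambda>q r. lt (Suc k - q) (Suc k - r)) p"
  then have "contains_pop k (\<lambda>q r. lt (Suc k - q) (Suc k - r)) (rev (rev p))" by simp
  then have "contains_pop k (\<lambda>q r. lt (Suc k - (Suc k - q)) (Suc k - (Suc k - r))) (rev p)"
    by (rule cp_rev1)
  then show "contains_pop k lt (rev p)"
    by (subst (asm) cp_cong[where lt' = lt]) auto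
qed

lemma cp_compl:
  assumes p: "p \<in> perms n"
  shows "contains_pop k lt (map (\<lambda>x. Suc n - x) p) \<longleftrightarrow> contains_pop k (\<lambda>q r. lt r q) p"
proof -
  have l: "length p = n" using p perms_length by blast
  have key: "(map (\<lambda>x. Suc n - x) p ! i < map (\<lambda>x. Suc n - x) p ! j) \<longleftrightarrow> p ! j < p ! i"
    if "i < n" "j < n" for i j
    using perms_nth[OF p that(1)] perms_nth[OF p that(2)] that l by auto
  have eq: "(\<forall>j\<in>{1..k}. \<forall>m\<in>{1..k}. lt j m \<longrightarrow> map (\<lambda>x. Suc n - x) p ! (\<iota> j) < map (\<lambda>x. Suc n - x) p ! (\<iota> m))
     \<longleftrightarrow> (\<forall>j\<in>{1..k}. \<forall>m\<in>{1..k}. lt m j \<longrightarrow> p ! (\<iota> j) < p ! (\<iota> m))"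
    if "\<forall>j\<in>{1..k}. \<iota> j < length p" for \<iota>
    using key that l by auto
  show ?thesis
    unfolding contains_pop_def length_map
  proof
    assume "\<exists>\<iota>. strict_mono_on {1..k} \<iota> \<and> (\<forall>j\<in>{1..k}. \<iota> j < length p) \<and>
        (\<forall>j\<in>{1..k}. \<forall>m\<in>{1..k}. lt j m \<longrightarrow> map (\<lambda>x. Suc n - x) p ! (\<iota> j) < map (\<lambda>x. Suc n - x) p ! (\<iota> m))"
    then obtain \<iota> where a: "strict_mono_on {1..k} \<iota>" "\<forall>j\<in>{1..k}. \<iota> j < length p"
        "\<forall>j\<in>{1..k}. \<forall>m\<in>{1..k}. lt j m \<longrightarrow> map (\<lambda>x. Suc n - x) p ! (\<iota> j) < map (\<lambda>x. Suc n - x) p ! (\<iota> m)"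
      by blast
    then have "\<forall>j\<in>{1..k}. \<forall>m\<in>{1..k}. lt m j \<longrightarrow> p ! (\<iota> j) < p ! (\<iota> m)" using eq[OF a(2)] by blast
    then show "\<exists>\<iota>. strict_mono_on {1..k} \<iota> \<and> (\<forall>j\<in>{1..k}. \<iota> j < length p) \<and>
        (\<forall>j\<in>{1..k}. \<forall>m\<in>{1..k}. lt m j \<longrightarrow> p ! (\<iota> j) < p ! (\<iota> m))" using a by blast
  next
    assume "\<exists>\<iota>. strict_mono_on {1..k} \<iota> \<and> (\<forall>j\<in>{1..k}. \<iota> j < length p) \<and>
        (\<forall>j\<in>{1..k}. \<forall>m\<in>{1..k}. lt m j \<longrightarrow> p ! (\<iota> j) < p ! (\<iota> m))"
    then obtain \<iota> where a: "strict_mono_on {1..k} \<iota>" "\<forall>j\<in>{1..k}. \<iota> j < length p"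
        "\<forall>j\<in>{1..k}. \<forall>m\<in>{1..k}. lt m j \<longrightarrow> p ! (\<iota> j) < p ! (\<iota> m)"
      by blast
    then have "\<forall>j\<in>{1..k}. \<forall>m\<in>{1..k}. lt j m \<longrightarrow> map (\<lambda>x. Suc n - x) p ! (\<iota> j) < map (\<lambda>x. Suc n - x) p ! (\<iota> m)"
      using eq[OF a(2)] by blast
    then show "\<exists>\<iota>. strict_mono_on {1..k} \<iota> \<and> (\<forall>j\<in>{1..k}. \<iota> j < length p) \<and>
        (\<forall>j\<in>{1..k}. \<forall>m\<in>{1..k}. lt j m \<longrightarrow> map (\<lambda>x. Suc n - x) p ! (\<iota> j) < map (\<lambda>x. Suc n - x) p ! (\<iota> m))"
      using a by blast
  qed
qed



lemma rev_perms: "p \<in> perms n \<Longrightarrow> rev p \<in> perms n"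
  unfolding perms_def by simp

lemma compl_perms: assumes p: "p \<in> perms n" shows "map (\<lambda>x. Suc n - x) p \<in> perms n"
proof -
  have d: "distinct p" and s: "set p = {1..n}" using p unfolding perms_def by auto
  have inj: "inj_on (\<lambda>x. Suc n - x) (set p)" unfolding s by (rule inj_onI) auto
  have "(\<lambda>x. Suc n - x) ` {1..n} = {1..n}"
  proof
    show "(\<lambda>x. Suc n - x) ` {1..n} \<subseteq> {1..n}" by auto
    show "{1..n} \<subseteq> (\<lambda>x. Suc n - x) ` {1..n}"
    proof
      fix y assume y: "y \<in> {1..n}"
      then have "y = Suc n - (Suc n - y)" "Suc n - y \<in> {1..n}" by auto
      then show "y \<in> (\<lambda>x. Suc n - x) ` {1..n}" by (metis image_eqI)
    qed
  qed
  then show ?thesis unfolding perms_def using d s inj by (simp add: distinct_map)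
qed

lemma compl_compl: assumes p: "p \<in> perms n" shows "map (\<lambda>x. Suc n - x) (map (\<lambda>x. Suc n - x) p) = p"
proof -
  have "\<forall>x\<in>set p. x \<le> n" using p unfolding perms_def by auto
  then show ?thesis by (induct p) auto
qed

lemma card_inv:
  assumes h: "\<And>p. p \<in> perms n \<Longrightarrow> h p \<in> perms n \<and> h (h p) = p"
    and c: "\<And>p. p \<in> perms n \<Longrightarrow> contains_pop k P (h p) \<longleftrightarrow> contains_pop k Q p"
  shows "card (avoiders n k P) = card (avoiders n k Q)"
proof -
  have "bij_betw h (avoiders n k Q) (avoiders n k P)"
  proof (rule bij_betw_byWitness[where f' = h])
    show "\<forall>a\<in>avoiders n k Q. h (h a) = a" using h unfolding avoiders_def by auto
    show "\<forall>a\<in>avoiders n k P. h (h a) = a" using h unfolding avoiders_def by auto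
    show "h ` avoiders n k Q \<subseteq> avoiders n k P" using h c unfolding avoiders_def by auto
    show "h ` avoiders n k P \<subseteq> avoiders n k Q"
    proof
      fix x assume "x \<in> h ` avoiders n k P"
      then obtain y where y: "y \<in> perms n" "\<not> contains_pop k P y" "x = h y"
        unfolding avoiders_def by auto
      have "contains_pop k Q (h y) \<longleftrightarrow> contains_pop k P (h (h y))" using c h y(1) by metis
      then show "x \<in> avoiders n k Q" using y h unfolding avoiders_def by auto
    qed
  qed
  then show ?thesis by (metis bij_betw_same_card)
qed

lemma compl_card:
  "card (avoiders n 4 (chain_pop a b c d)) = card (avoiders n 4 (chain_pop c b a d))"
proof (rule card_inv[where h = "map (\<lambda>x. Suc n - x)"])
  fix p assume p: "p \<in> perms n"
  show "map (\<lambda>x. Suc n - x) p \<in> perms n \<and> map (\<lambda>x. Suc n - x) (map (\<lambda>x. Suc n - x) p) = p"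
    using compl_perms[OF p] compl_compl[OF p] by simp
  have e: "(\<lambda>q r. chain_pop a b c d r q) = chain_pop c b a d"
    unfolding chain_pop_def by (intro ext) auto
  show "contains_pop 4 (chain_pop a b c d) (map (\<lambda>x. Suc n - x) p) = contains_pop 4 (chain_pop c b a d) p"
    using cp_compl[OF p, of 4 "chain_pop a b c d"] unfolding e .
qed

lemma rev_card:
  assumes abc: "a \<in> {1..4}" "b \<in> {1..4}" "c \<in> {1..4}"
  shows "card (avoiders n 4 (chain_pop a b c d)) = card (avoiders n 4 (chain_pop (5-a) (5-b) (5-c) d))"
proof (rule card_inv[where h = rev])
  fix p assume p: "p \<in> perms n"
  show "rev p \<in> perms n \<and> rev (rev p) = p" using rev_perms[OF p] by simp
  have "contains_pop 4 (chain_pop a b c d) (rev p) =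
        contains_pop 4 (\<lambda>q r. chain_pop a b c d (Suc 4 - q) (Suc 4 - r)) p" by (rule cp_rev)
  also have "\<dots> = contains_pop 4 (chain_pop (5-a) (5-b) (5-c) d) p"
    by (rule cp_cong) (use abc in \<open>auto simp: chain_pop_def\<close>)
  finally show "contains_pop 4 (chain_pop a b c d) (rev p) = contains_pop 4 (chain_pop (5-a) (5-b) (5-c) d) p" .
qed

lemma av_R1: "avoiders n 4 (chain_pop 1 2 4 d) = Av R1 n"
  unfolding avoiders_def Av_def occ3_def using cp_occ[of 1 2 4 d]
  by (simp add: V_def R1_def)
lemma av_R2: "avoiders n 4 (chain_pop 1 4 2 d) = Av R2 n"
  unfolding avoiders_def Av_def occ3_def using cp_occ[of 1 4 2 d]
  by (simp add: V_def R2_def conj_commute)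
lemma av_R3: "avoiders n 4 (chain_pop 4 1 2 d) = Av R3 n"
  unfolding avoiders_def Av_def occ3_def using cp_occ[of 4 1 2 d]
  by (simp add: V_def R3_def conj_commute)

lemma key3:
  assumes n: "1 \<le> n" and abc: "a \<in> {1,2,4}" "b \<in> {1,2,4}" "c \<in> {1,2,4}" "distinct [a,b,c]"
  shows "card (avoiders n 4 (chain_pop a b c d)) = Phi (n - 1) (\<lambda>_. 1)"
proof -
  have nn: "Suc (n - 1) = n" using n by simp
  have c1: "card (avoiders n 4 (chain_pop 1 2 4 d)) = Phi (n - 1) (\<lambda>_. 1)"
    using I1.card_Av[of "n - 1"] unfolding nn av_R1 .
  have c2: "card (avoiders n 4 (chain_pop 1 4 2 d)) = Phi (n - 1) (\<lambda>_. 1)"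
    using I2.card_Av[of "n - 1"] unfolding nn av_R2 .
  have c3: "card (avoiders n 4 (chain_pop 4 1 2 d)) = Phi (n - 1) (\<lambda>_. 1)"
    using I3.card_Av[of "n - 1"] unfolding nn av_R3 .
  have "(a,b,c) \<in> {(1,2,4),(1,4,2),(4,1,2),(4,2,1),(2,4,1),(2,1,4)}" using abc by auto
  then show ?thesis
    using c1 c2 c3 compl_card[of n 4 2 1 d] compl_card[of n 2 4 1 d] compl_card[of n 2 1 4 d]
    by auto
qed

lemma set14: "{1..4::nat} = {1,2,3,4}" by auto

lemma key:
  assumes n: "1 \<le> n" and d: "d \<in> {2,3}" and dis: "distinct [a,b,c,d]" and s: "{a,b,c,d} = {1..4::nat}"
  shows "card (avoiders n 4 (chain_pop a b c d)) = Phi (n - 1) (\<lambda>_. 1)"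
proof (cases "d = 3")
  case True
  have "a \<in> {1,2,4}" "b \<in> {1,2,4}" "c \<in> {1,2,4}" "distinct [a,b,c]"
    using s dis True unfolding set14 by auto
  then show ?thesis using key3[OF n] by blast
next
  case False
  then have d2: "d = 2" using d by auto
  have r: "a \<in> {1,3,4}" "b \<in> {1,3,4}" "c \<in> {1,3,4}" "distinct [a,b,c]"
    using s dis d2 unfolding set14 by auto
  then have r2: "5 - a \<in> {1,2,4}" "5 - b \<in> {1,2,4}" "5 - c \<in> {1,2,4}" "distinct [5-a,5-b,5-c]"
    by auto
  have "card (avoiders n 4 (chain_pop a b c d)) = card (avoiders n 4 (chain_pop (5-a) (5-b) (5-c) d))"
    by (rule rev_card) (use r in auto)
  also have "\<dots> = Phi (n - 1) (\<lambda>_. 1)" using key3[OF n r2] .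
  finally show ?thesis .
qed

theorem mainTheorem8:
  shows "(\<forall>a b c d a' b' c' d'.
            d \<in> {2,3} \<and> distinct [a,b,c,d] \<and> {a,b,c,d} = {1..4} \<and>
            d' \<in> {2,3} \<and> distinct [a',b',c',d'] \<and> {a',b',c',d'} = {1..4::nat}
            \<longrightarrow> wilf_equiv 4 (chain_pop a b c d) (chain_pop a' b' c' d'))
         \<and> wilf_equiv 4 (chain_pop 4 1 2 3) (chain_pop 4 2 1 3)
         \<and> wilf_equiv 4 (chain_pop 4 2 1 3) (chain_pop 2 4 1 3)"
proof -
  have A: "wilf_equiv 4 (chain_pop a b c d) (chain_pop a' b' c' d')"
    if "d \<in> {2,3}" "distinct [a,b,c,d]" "{a,b,c,d} = {1..4}"
       "d' \<in> {2,3}" "distinct [a',b',c',d']" "{a',b',c',d'} = {1..4::nat}" for a b c d a' b' c' d'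
    unfolding wilf_equiv_def using key[OF _ that(1-3)] key[OF _ that(4-6)] by simp
  have s1: "{4,1,2,3} = {1..4::nat}" "{4,2,1,3} = {1..4::nat}" "{2,4,1,3} = {1..4::nat}"
    unfolding set14 by auto
  show ?thesis
    using A A[of 3 4 1 2 3 4 2 1] A[of 3 4 2 1 3 2 4 1] s1 by auto
qed


end
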